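(* Let $d\ge1$ and let $G$ be the graphical 2-sum of two graphs $G_1$ and $G_2$ along an edge $e$. Suppose that $e$ is not a coloop in either $\mathcal{R}_d(G_1)$ or $\mathcal{R}_d(G_2)$. Then $G$ is a $k$-fold $\mathcal{R}_d$-circuit if and only if $G_1$ is a $k_1$-fold $\mathcal{R}_d$-circuit and $G_2$ is a $k_2$-fold $\mathcal{R}_d$-circuit with $k_1+k_2=k+1$.
   Context: For a graph $G=(V,E)$ and a generic $p:V\to\mathbb{R}^d$ (coordinates algebraically independent over $\mathbb{Q}$), the rigidity matrix has a row for each $uv\in E$ with $p(u)-p(v)$ in the $d$ columns of $u$, $p(v)-p(u)$ in those of $v$, zeros elsewhere; $\mathcal{R}_d(G)$ is its row matroid, with rank $r_d$. A coloop is an element in no circuit. For graphs $G_1,G_2$ with $G_1\cap G_2\cong K_2$ and $E(G_1)\cap E(G_2)=\{e\}$, their graphical 2-sum along $e$ is $(G_1\cup G_2)-e$. A set of edges is cyclic if it is a union of $\mathcal{R}_d$-circuits; a graph with edge set $D$ is a $k$-fold $\mathcal{R}_d$-circuit if $D$ is cyclic and $r_d(D)=|D|-k$. *)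

theory Defs
  imports Complex_Main
begin

definition simple_graph :: "'a set \<Rightarrow> 'a set set \<Rightarrow> bool" where
  "simple_graph V E \<longleftrightarrow> finite V \<and> (\<forall>e\<in>E. card e = 2 \<and> e \<subseteq> V)"

text \<open>A polynomial is a finitely supported coefficient function on
  monomials (exponent vectors supported in I).\<close>
definition alg_indep_Q :: "'i set \<Rightarrow> ('i \<Rightarrow> real) \<Rightarrow> bool" where
  "alg_indep_Q I x \<longleftrightarrow>
     (\<forall>c :: ('i \<Rightarrow> nat) \<Rightarrow> rat.
        finite {m. c m \<noteq> 0} \<longrightarrow>
        (\<forall>m. c m \<noteq> 0 \<longrightarrow> (\<forall>i. i \<notin> I \<longrightarrow> m i = 0)) \<longrightarrow>
        (\<Sum>m\<in>{m. c m \<noteq> 0}. of_rat (c m) * (\<Prod>i\<in>I. x i ^ m i)) = 0 \<longrightarrow>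
        (\<forall>m. c m = 0))"

definition generic :: "nat \<Rightarrow> 'a set \<Rightarrow> ('a \<Rightarrow> nat \<Rightarrow> real) \<Rightarrow> bool" where
  "generic d V p \<longleftrightarrow> alg_indep_Q (V \<times> {..<d}) (\<lambda>(v, i). p v i)"

text \<open>Row of the rigidity matrix for edge e = {u,v}: p(u)-p(v) in the d columns
  of u, p(v)-p(u) in those of v, zero elsewhere. Columns are indexed by (w,i).\<close>
definition rig_row :: "nat \<Rightarrow> ('a \<Rightarrow> nat \<Rightarrow> real) \<Rightarrow> 'a set \<Rightarrow> 'a \<times> nat \<Rightarrow> real" where
  "rig_row d p e = (\<lambda>(w, i). if w \<in> e \<and> i < d then p w i - p (the_elem (e - {w})) i else 0)"

definition rig_indep :: "nat \<Rightarrow> ('a \<Rightarrow> nat \<Rightarrow> real) \<Rightarrow> 'a set set \<Rightarrow> bool" where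
  "rig_indep d p F \<longleftrightarrow>
     (\<forall>c :: 'a set \<Rightarrow> real. (\<forall>x. (\<Sum>e\<in>F. c e * rig_row d p e x) = 0) \<longrightarrow> (\<forall>e\<in>F. c e = 0))"

definition rig_rank :: "nat \<Rightarrow> ('a \<Rightarrow> nat \<Rightarrow> real) \<Rightarrow> 'a set set \<Rightarrow> nat" where
  "rig_rank d p F = Max (card ` {I. I \<subseteq> F \<and> rig_indep d p I})"

definition rig_circuit :: "nat \<Rightarrow> ('a \<Rightarrow> nat \<Rightarrow> real) \<Rightarrow> 'a set set \<Rightarrow> bool" where
  "rig_circuit d p C \<longleftrightarrow> \<not> rig_indep d p C \<and> (\<forall>C'. C' \<subset> C \<longrightarrow> rig_indep d p C')"

definition rig_coloop :: "nat \<Rightarrow> ('a \<Rightarrow> nat \<Rightarrow> real) \<Rightarrow> 'a set set \<Rightarrow> 'a set \<Rightarrow> bool" where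
  "rig_coloop d p E e \<longleftrightarrow> e \<in> E \<and> \<not> (\<exists>C. C \<subseteq> E \<and> rig_circuit d p C \<and> e \<in> C)"

definition rig_cyclic :: "nat \<Rightarrow> ('a \<Rightarrow> nat \<Rightarrow> real) \<Rightarrow> 'a set set \<Rightarrow> bool" where
  "rig_cyclic d p D \<longleftrightarrow> (\<exists>\<C>. (\<forall>C\<in>\<C>. rig_circuit d p C) \<and> \<Union>\<C> = D)"

definition k_fold_circuit :: "nat \<Rightarrow> ('a \<Rightarrow> nat \<Rightarrow> real) \<Rightarrow> nat \<Rightarrow> 'a set set \<Rightarrow> bool" where
  "k_fold_circuit d p k D \<longleftrightarrow> rig_cyclic d p D \<and> int (rig_rank d p D) = int (card D) - int k"

definition two_sum :: "'a set \<Rightarrow> 'a set set \<Rightarrow> 'a set \<Rightarrow> 'a set set \<Rightarrow> 'a set \<Rightarrow> 'a set \<Rightarrow> 'a set set \<Rightarrow> bool" where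
  "two_sum V1 E1 V2 E2 e V E \<longleftrightarrow>
     simple_graph V1 E1 \<and> simple_graph V2 E2 \<and>
     V1 \<inter> V2 = e \<and> E1 \<inter> E2 = {e} \<and>
     V = V1 \<union> V2 \<and> E = (E1 \<union> E2) - {e}"

end

theory Submission
  imports Defs "HOL-Library.Function_Algebras"
begin


lemma row_edge:
  assumes "x \<noteq> y"
  shows "rig_row d p {x,y} (z,i) = (if i<d then (if z = x then p x i - p y i else if z = y then p y i - p x i else 0) else 0)"
  using assms by (auto simp: rig_row_def insert_Diff_if)

lemma row_out1: "z \<notin> f \<Longrightarrow> rig_row d p f (z,i) = 0"
  by (simp add: rig_row_def)

lemma row_out2: "\<not> i < d \<Longrightarrow> rig_row d p f (z,i) = 0"
  by (simp add: rig_row_def)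

lemma prod_delta_pow:
  assumes "finite I" "a \<in> I"
  shows "(\<Prod>j\<in>I. (g j::real) ^ (if j = a then 1 else 0)) = g a"
proof -
  have "(\<Prod>j\<in>I. g j ^ (if j = a then 1 else 0)) = (\<Prod>j\<in>I. if j = a then g j else 1)"
    by (rule prod.cong) auto
  also have "\<dots> = g a" using assms by (simp add: prod.delta)
  finally show ?thesis .
qed

lemma generic_distinct:
  assumes "generic d V p" "d \<ge> 1" "finite V" "x \<in> V" "y \<in> V" "x \<noteq> y"
  shows "p x 0 \<noteq> p y 0"
proof
  assume eq: "p x 0 = p y 0"
  define I where "I = V \<times> {..<d}"
  define mx :: "'a \<times> nat \<Rightarrow> nat" where "mx = (\<lambda>j. if j = (x,0) then 1 else 0)"
  define my :: "'a \<times> nat \<Rightarrow> nat" where "my = (\<lambda>j. if j = (y,0) then 1 else 0)"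
  have ne: "mx \<noteq> my" using assms(6) unfolding mx_def my_def by (metis prod.inject zero_neq_one)
  define c :: "('a \<times> nat \<Rightarrow> nat) \<Rightarrow> rat" where "c = (\<lambda>m. if m = mx then 1 else if m = my then -1 else 0)"
  have supp: "{m. c m \<noteq> 0} = {mx, my}" using ne by (auto simp: c_def)
  have fI: "finite I" using assms(3) by (simp add: I_def)
  have xI: "(x,0) \<in> I" "(y,0) \<in> I" using assms by (auto simp: I_def)
  have px: "(\<Prod>i\<in>I. (\<lambda>(v, i). p v i) i ^ mx i) = p x 0"
    unfolding mx_def using prod_delta_pow[OF fI xI(1), of "\<lambda>(v, i). p v i"] by simp
  have py: "(\<Prod>i\<in>I. (\<lambda>(v, i). p v i) i ^ my i) = p y 0"
    unfolding my_def using prod_delta_pow[OF fI xI(2), of "\<lambda>(v, i). p v i"] by simp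
  have "alg_indep_Q I (\<lambda>(v, i). p v i)" using assms(1) by (simp add: generic_def I_def)
  moreover have "finite {m. c m \<noteq> 0}" using supp by simp
  moreover have "\<forall>m. c m \<noteq> 0 \<longrightarrow> (\<forall>i. i \<notin> I \<longrightarrow> m i = 0)"
    using xI by (auto simp: c_def mx_def my_def)
  moreover have "(\<Sum>m\<in>{m. c m \<noteq> 0}. of_rat (c m) * (\<Prod>i\<in>I. (\<lambda>(v, i). p v i) i ^ m i)) = 0"
    unfolding supp using ne px py eq by (simp add: c_def)
  ultimately have "\<forall>m. c m = 0" unfolding alg_indep_Q_def by blast
  then show False by (metis c_def one_neq_zero zero_neq_one)
qed



lemma Phi_two:
  fixes d :: nat
  assumes "finite V" "x \<in> V" "y \<in> V" "x \<noteq> y"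
    and "\<And>z i. z \<notin> {x,y} \<or> \<not> i < d \<Longrightarrow> g (z,i) = 0"
  shows "(\<Sum>(z,i)\<in>V \<times> {..<d}. g (z,i) * (q z i::real)) = (\<Sum>i<d. g (x,i) * q x i + g (y,i) * q y i)"
proof -
  have "(\<Sum>(z,i)\<in>V \<times> {..<d}. g (z,i) * q z i) = (\<Sum>(z,i)\<in>{x,y} \<times> {..<d}. g (z,i) * q z i)"
  proof (rule sum.mono_neutral_right)
    show "finite (V \<times> {..<d})" using assms(1) by simp
    show "{x,y} \<times> {..<d} \<subseteq> V \<times> {..<d}" using assms(2,3) by auto
    show "\<forall>zi\<in>V \<times> {..<d} - {x,y} \<times> {..<d}. (case zi of (z,i) \<Rightarrow> g (z,i) * q z i) = 0"
    proof
      fix zi assume "zi \<in> V \<times> {..<d} - {x,y} \<times> {..<d}"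
      then obtain z i where "zi = (z,i)" "z \<notin> {x,y} \<or> \<not> i < d" by auto
      then show "(case zi of (z,i) \<Rightarrow> g (z,i) * q z i) = 0" using assms(5) by simp
    qed
  qed
  also have "\<dots> = (\<Sum>z\<in>{x,y}. \<Sum>i<d. g (z,i) * q z i)"
    by (simp add: sum.cartesian_product)
  also have "\<dots> = (\<Sum>i<d. g (x,i) * q x i) + (\<Sum>i<d. g (y,i) * q y i)"
    using assms(4) by simp
  also have "\<dots> = (\<Sum>i<d. g (x,i) * q x i + g (y,i) * q y i)"
    by (simp add: sum.distrib)
  finally show ?thesis .
qed

lemma Phi_edge:
  assumes "finite V" "x \<in> V" "y \<in> V" "x \<noteq> y"
  shows "(\<Sum>(z,i)\<in>V \<times> {..<d}. rig_row d p {x,y} (z,i) * (q z i::real)) = (\<Sum>i<d. (p x i - p y i) * (q x i - q y i))"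
proof -
  have "(\<Sum>(z,i)\<in>V \<times> {..<d}. rig_row d p {x,y} (z,i) * (q z i::real)) =
     (\<Sum>i<d. rig_row d p {x,y} (x,i) * q x i + rig_row d p {x,y} (y,i) * q y i)"
    by (rule Phi_two) (use assms in \<open>auto simp: row_edge\<close>)
  also have "\<dots> = (\<Sum>i<d. (p x i - p y i) * (q x i - q y i))"
    by (rule sum.cong) (use assms in \<open>auto simp: row_edge algebra_simps\<close>)
  finally show ?thesis .
qed

lemma Phi_comb:
  "(\<Sum>(z,i)\<in>W. (\<Sum>f\<in>F. a f * rig_row d p f (z,i)) * (q z i::real)) =
   (\<Sum>f\<in>F. a f * (\<Sum>(z,i)\<in>W. rig_row d p f (z,i) * q z i))"
proof -
  have "(\<Sum>(z,i)\<in>W. (\<Sum>f\<in>F. a f * rig_row d p f (z,i)) * (q z i::real)) =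
        (\<Sum>(z,i)\<in>W. \<Sum>f\<in>F. a f * (rig_row d p f (z,i) * q z i))"
    by (simp add: sum_distrib_right case_prod_beta mult.assoc)
  also have "\<dots> = (\<Sum>f\<in>F. \<Sum>(z,i)\<in>W. a f * (rig_row d p f (z,i) * q z i))"
    by (simp add: case_prod_beta sum.swap[of _ W])
  also have "\<dots> = (\<Sum>f\<in>F. a f * (\<Sum>(z,i)\<in>W. rig_row d p f (z,i) * q z i))"
    by (simp add: sum_distrib_left case_prod_beta)
  finally show ?thesis .
qed

text \<open>rotation motion\<close>
lemma rot_orth:
  fixes p :: "'a \<Rightarrow> nat \<Rightarrow> real" and c \<delta> :: "nat \<Rightarrow> real" and d :: nat
  defines "q \<equiv> (\<lambda>z i. c i * (\<Sum>j<d. \<delta> j * p z j) - \<delta> i * (\<Sum>j<d. c j * p z j))"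
  shows "(\<Sum>i<d. (p x i - p y i) * (q x i - q y i)) = 0"
proof -
  define Z where "Z = (\<lambda>i. p x i - p y i)"
  have D: "(\<Sum>j<d. \<delta> j * p x j) - (\<Sum>j<d. \<delta> j * p y j) = (\<Sum>j<d. \<delta> j * Z j)"
    by (simp add: Z_def sum_subtractf[symmetric] algebra_simps)
  have C: "(\<Sum>j<d. c j * p x j) - (\<Sum>j<d. c j * p y j) = (\<Sum>j<d. c j * Z j)"
    by (simp add: Z_def sum_subtractf[symmetric] algebra_simps)
  have eq: "\<And>i. q x i - q y i = c i * (\<Sum>j<d. \<delta> j * Z j) - \<delta> i * (\<Sum>j<d. c j * Z j)"
    unfolding q_def D[symmetric] C[symmetric] by (simp add: algebra_simps)
  have "(\<Sum>i<d. (p x i - p y i) * (q x i - q y i)) =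
     (\<Sum>i<d. Z i * c i * (\<Sum>j<d. \<delta> j * Z j) - Z i * \<delta> i * (\<Sum>j<d. c j * Z j))"
  proof (rule sum.cong)
    fix i show "(p x i - p y i) * (q x i - q y i) = Z i * c i * (\<Sum>j<d. \<delta> j * Z j) - Z i * \<delta> i * (\<Sum>j<d. c j * Z j)"
      unfolding eq by (simp add: Z_def algebra_simps)
  qed simp
  also have "\<dots> = (\<Sum>i<d. Z i * c i) * (\<Sum>j<d. \<delta> j * Z j) - (\<Sum>i<d. Z i * \<delta> i) * (\<Sum>j<d. c j * Z j)"
    by (simp add: sum_subtractf sum_distrib_right)
  also have "\<dots> = 0" by (simp add: mult.commute)
  finally show ?thesis .
qed



lemma sg_fin: "simple_graph V E \<Longrightarrow> finite E"
  unfolding simple_graph_def by (metis Pow_iff finite_Pow_iff finite_subset subsetI)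

lemma sg_edge: "simple_graph V E \<Longrightarrow> f \<in> E \<Longrightarrow> \<exists>x y. x \<noteq> y \<and> f = {x,y} \<and> x \<in> V \<and> y \<in> V"
  unfolding simple_graph_def by (metis card_2_iff insert_subset)

lemma sq_sum_zero:
  fixes t :: "nat \<Rightarrow> real"
  assumes "(\<Sum>i<d. t i * t i) = 0" "i < d"
  shows "t i = 0"
proof -
  have "\<forall>i\<in>{..<d}. t i * t i = 0"
    using assms(1) by (subst sum_nonneg_eq_0_iff[symmetric]) auto
  then show ?thesis using assms(2) by simp
qed

lemma key:
  fixes d :: nat and p :: "'a \<Rightarrow> nat \<Rightarrow> real" and a b :: "'a set \<Rightarrow> real"
  assumes sg1: "simple_graph V1 E1" and sg2: "simple_graph V2 E2"
    and int: "V1 \<inter> V2 = {u,v}" and uv: "u \<noteq> v" and d1: "d \<ge> 1" and pd: "p u 0 \<noteq> p v 0"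
    and eq: "\<And>z. (\<Sum>f\<in>E1. a f * rig_row d p f z) = (\<Sum>g\<in>E2. b g * rig_row d p g z)"
  shows "\<exists>l. \<forall>z. (\<Sum>f\<in>E1. a f * rig_row d p f z) = l * rig_row d p {u,v} z"
proof -
  define w where "w = (\<lambda>z. \<Sum>f\<in>E1. a f * rig_row d p f z)"
  have finV1: "finite V1" using sg1 by (simp add: simple_graph_def)
  have uV: "u \<in> V1" "v \<in> V1" using int by auto
  have E1V: "\<And>f. f \<in> E1 \<Longrightarrow> f \<subseteq> V1" using sg1 by (simp add: simple_graph_def)
  have E2V: "\<And>f. f \<in> E2 \<Longrightarrow> f \<subseteq> V2" using sg2 by (simp add: simple_graph_def)
  have supp: "w (z,i) = 0" if "z \<notin> {u,v} \<or> \<not> i < d" for z i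
  proof (cases "i < d")
    case False then show ?thesis by (simp add: w_def row_out2)
  next
    case True
    then have "z \<notin> V1 \<or> z \<notin> V2" using that int by auto
    then show ?thesis
    proof
      assume z: "z \<notin> V1"
      have "a f * rig_row d p f (z,i) = 0" if "f \<in> E1" for f
        using E1V[OF that] z by (metis row_out1 subsetD mult_zero_right)
      then show ?thesis unfolding w_def by (simp add: sum.neutral)
    next
      assume z: "z \<notin> V2"
      have "b f * rig_row d p f (z,i) = 0" if "f \<in> E2" for f
        using E2V[OF that] z by (metis row_out1 subsetD mult_zero_right)
      then show ?thesis unfolding w_def eq by (simp add: sum.neutral)
    qed
  qed
  have orth: "(\<Sum>i<d. w (u,i) * q u i + w (v,i) * q v i) = 0"
    if qh: "\<And>x y. (\<Sum>i<d. (p x i - p y i) * (q x i - q y i)) = 0" for q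
  proof -
    have "(\<Sum>i<d. w (u,i) * q u i + w (v,i) * q v i) = (\<Sum>(z,i)\<in>V1 \<times> {..<d}. w (z,i) * q z i)"
      by (rule Phi_two[symmetric]) (use finV1 uV uv supp in auto)
    also have "\<dots> = (\<Sum>f\<in>E1. a f * (\<Sum>(z,i)\<in>V1 \<times> {..<d}. rig_row d p f (z,i) * q z i))"
      unfolding w_def by (rule Phi_comb)
    also have "\<dots> = 0"
    proof (rule sum.neutral, rule ballI)
      fix f assume "f \<in> E1"
      then obtain x y where "x \<noteq> y" "f = {x,y}" "x \<in> V1" "y \<in> V1" using sg_edge[OF sg1] by blast
      then show "a f * (\<Sum>(z,i)\<in>V1 \<times> {..<d}. rig_row d p f (z,i) * q z i) = 0"
        using Phi_edge[OF finV1, of x y d p q] qh by simp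
    qed
    finally show ?thesis .
  qed
  define t where "t = (\<lambda>i. w (u,i) + w (v,i))"
  have "(\<Sum>i<d. w (u,i) * (\<lambda>z i. t i) u i + w (v,i) * (\<lambda>z i. t i) v i) = 0"
    by (rule orth) simp
  then have "(\<Sum>i<d. t i * t i) = 0" by (simp add: t_def algebra_simps)
  then have wv: "w (v,i) = - w (u,i)" if "i < d" for i
    using sq_sum_zero[OF _ that, of t] by (simp add: t_def eq_neg_iff_add_eq_0)
  define \<delta> where "\<delta> = (\<lambda>j. p u j - p v j)"
  define N where "N = (\<Sum>j<d. \<delta> j * \<delta> j)"
  define wu where "wu = (\<lambda>i. w (u,i))"
  have rot: "N * (\<Sum>i<d. wu i * c i) - (\<Sum>i<d. wu i * \<delta> i) * (\<Sum>j<d. c j * \<delta> j) = 0" for c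
  proof -
    define q where "q = (\<lambda>z i. c i * (\<Sum>j<d. \<delta> j * p z j) - \<delta> i * (\<Sum>j<d. c j * p z j))"
    have qh: "\<And>x y. (\<Sum>i<d. (p x i - p y i) * (q x i - q y i)) = 0"
      unfolding q_def by (rule rot_orth)
    have D: "(\<Sum>j<d. \<delta> j * p u j) - (\<Sum>j<d. \<delta> j * p v j) = N"
      by (simp add: N_def \<delta>_def sum_subtractf[symmetric] algebra_simps)
    have C: "(\<Sum>j<d. c j * p u j) - (\<Sum>j<d. c j * p v j) = (\<Sum>j<d. c j * \<delta> j)"
      by (simp add: \<delta>_def sum_subtractf[symmetric] algebra_simps)
    have qd: "q u i - q v i = c i * N - \<delta> i * (\<Sum>j<d. c j * \<delta> j)" for i
      unfolding q_def D[symmetric] C[symmetric] by (simp add: algebra_simps)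
    have "0 = (\<Sum>i<d. w (u,i) * q u i + w (v,i) * q v i)" using orth[OF qh] by simp
    also have "\<dots> = (\<Sum>i<d. wu i * (c i * N - \<delta> i * (\<Sum>j<d. c j * \<delta> j)))"
    proof (rule sum.cong)
      fix i assume "i \<in> {..<d}"
      then show "w (u,i) * q u i + w (v,i) * q v i = wu i * (c i * N - \<delta> i * (\<Sum>j<d. c j * \<delta> j))"
        unfolding qd[symmetric] using wv[of i] by (simp add: wu_def algebra_simps)
    qed simp
    also have "\<dots> = N * (\<Sum>i<d. wu i * c i) - (\<Sum>i<d. wu i * \<delta> i) * (\<Sum>j<d. c j * \<delta> j)"
      by (simp add: algebra_simps sum_subtractf sum_distrib_left sum_distrib_right)
    finally show ?thesis by simp
  qed
  have Npos: "N > 0"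
  proof -
    have a: "\<delta> 0 * \<delta> 0 \<le> N" unfolding N_def
      by (rule member_le_sum) (use d1 in auto)
    have "\<delta> 0 \<noteq> 0" using pd by (simp add: \<delta>_def)
    then have "\<delta> 0 * \<delta> 0 > 0" by (meson not_real_square_gt_zero)
    with a show ?thesis by simp
  qed
  define W where "W = (\<Sum>i<d. wu i * \<delta> i)"
  define c0 where "c0 = (\<lambda>i. N * wu i - W * \<delta> i)"
  have "(\<Sum>j<d. c0 j * \<delta> j) = N * (\<Sum>j<d. wu j * \<delta> j) - W * (\<Sum>j<d. \<delta> j * \<delta> j)"
    by (simp add: c0_def algebra_simps sum_subtractf sum_distrib_left)
  then have K0: "(\<Sum>j<d. c0 j * \<delta> j) = 0"
    by (simp add: W_def N_def)
  have "N * (\<Sum>i<d. wu i * c0 i) = 0" using rot[of c0] K0 by simp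
  then have wc: "(\<Sum>i<d. wu i * c0 i) = 0" using Npos by simp
  have "(\<Sum>i<d. c0 i * c0 i) = N * (\<Sum>i<d. wu i * c0 i) - W * (\<Sum>j<d. c0 j * \<delta> j)"
    by (simp add: c0_def algebra_simps sum_subtractf sum_distrib_left sum_distrib_right sum.distrib)
  then have "(\<Sum>i<d. c0 i * c0 i) = 0" using wc K0 by simp
  then have c00: "c0 i = 0" if "i < d" for i using sq_sum_zero that by blast
  define l where "l = W / N"
  have wul: "wu i = l * \<delta> i" if "i < d" for i
    using c00[OF that] Npos by (simp add: c0_def l_def field_simps)
  have "\<forall>z. w z = l * rig_row d p {u,v} z"
  proof
    fix z show "w z = l * rig_row d p {u,v} z"
    proof (cases z)
      case (Pair z' i)
      show ?thesis
      proof (cases "i < d \<and> z' \<in> {u,v}")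
        case True
        then show ?thesis using wul[of i] wv[of i] uv
          by (auto simp: Pair row_edge wu_def \<delta>_def algebra_simps)
      next
        case False
        then show ?thesis using supp[of z' i] uv by (auto simp: Pair row_edge)
      qed
    qed
  qed
  then show ?thesis unfolding w_def by blast
qed



definition sc :: "real \<Rightarrow> ('b \<Rightarrow> real) \<Rightarrow> 'b \<Rightarrow> real" where
  "sc c f = (\<lambda>z. c * f z)"

interpretation fv: vector_space "sc :: real \<Rightarrow> ('b \<Rightarrow> real) \<Rightarrow> 'b \<Rightarrow> real"
  by unfold_locales (auto simp: sc_def fun_eq_iff algebra_simps)

lemma sum_fun_apply: "(\<Sum>v\<in>A. (g v :: 'b \<Rightarrow> real)) z = (\<Sum>v\<in>A. g v z)"
  by (induction A rule: infinite_finite_induct) auto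

lemma comb_eq: "(\<Sum>f\<in>F. sc (c f) (R f)) = (\<lambda>z. \<Sum>f\<in>F. c f * R f z)"
  by (simp add: fun_eq_iff sum_fun_apply sc_def)

lemma comb_img:
  assumes "inj_on R F"
  shows "(\<Sum>v\<in>R ` F. sc (u v) v) = (\<lambda>z. \<Sum>f\<in>F. u (R f) * R f z)"
  using assms by (simp add: sum.reindex comb_eq)

lemma indep_iff:
  assumes "finite F" "inj_on (rig_row d p) F"
  shows "rig_indep d p F \<longleftrightarrow> fv.independent (rig_row d p ` F)"
proof
  assume ind: "rig_indep d p F"
  show "fv.independent (rig_row d p ` F)"
  proof
    assume "fv.dependent (rig_row d p ` F)"
    then obtain u where u: "\<exists>v\<in>rig_row d p ` F. u v \<noteq> 0" "(\<Sum>v\<in>rig_row d p ` F. sc (u v) v) = 0"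
      using fv.dependent_finite[of "rig_row d p ` F"] assms(1) by auto
    have "\<forall>x. (\<Sum>e\<in>F. u (rig_row d p e) * rig_row d p e x) = 0"
      using u(2) unfolding comb_img[OF assms(2)] by (simp add: fun_eq_iff)
    then have "\<forall>e\<in>F. u (rig_row d p e) = 0"
      using ind unfolding rig_indep_def by (elim allE[of _ "\<lambda>e. u (rig_row d p e)"]) simp
    then show False using u(1) by auto
  qed
next
  assume ind: "fv.independent (rig_row d p ` F)"
  show "rig_indep d p F" unfolding rig_indep_def
  proof (intro allI impI)
    fix c assume c: "\<forall>x. (\<Sum>e\<in>F. c e * rig_row d p e x) = 0"
    define u where "u = (\<lambda>v. c (inv_into F (rig_row d p) v))"
    have "(\<Sum>v\<in>rig_row d p ` F. sc (u v) v) = 0"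
      unfolding comb_img[OF assms(2)] using c assms(2) by (simp add: u_def fun_eq_iff)
    then have "\<forall>v\<in>rig_row d p ` F. u v = 0"
      using ind fv.dependent_finite[of "rig_row d p ` F"] assms(1) by auto
    then show "\<forall>e\<in>F. c e = 0" using assms(2) by (auto simp: u_def)
  qed
qed

lemma rank_eq:
  assumes "finite F" "inj_on (rig_row d p) F" "B \<subseteq> F" "rig_indep d p B"
    and sp: "\<forall>f\<in>F. rig_row d p f \<in> fv.span (rig_row d p ` B)"
  shows "rig_rank d p F = card B"
  unfolding rig_rank_def
proof (rule Max_eqI)
  show "finite (card ` {I. I \<subseteq> F \<and> rig_indep d p I})"
    by (rule finite_imageI, rule finite_subset[of _ "Pow F"]) (use assms(1) in auto)
  show "card B \<in> card ` {I. I \<subseteq> F \<and> rig_indep d p I}" using assms by auto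
  fix y assume "y \<in> card ` {I. I \<subseteq> F \<and> rig_indep d p I}"
  then obtain I where I: "y = card I" "I \<subseteq> F" "rig_indep d p I" by auto
  have fI: "finite I" "finite B" using finite_subset[OF I(2) assms(1)] finite_subset[OF assms(3) assms(1)] by auto
  have injI: "inj_on (rig_row d p) I" "inj_on (rig_row d p) B"
    using inj_on_subset[OF assms(2) I(2)] inj_on_subset[OF assms(2) assms(3)] by auto
  have "fv.independent (rig_row d p ` I)" using indep_iff[OF fI(1) injI(1)] I by simp
  moreover have "rig_row d p ` I \<subseteq> fv.span (rig_row d p ` B)" using sp I by auto
  ultimately have "card (rig_row d p ` I) \<le> card (rig_row d p ` B)"
    using fv.independent_span_bound[of "rig_row d p ` B" "rig_row d p ` I"] fI by simp
  then show "y \<le> card B" using I injI by (simp add: card_image)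
qed

lemma extend_basis:
  assumes "finite F" "inj_on (rig_row d p) F" "S \<subseteq> F" "rig_indep d p S"
  obtains B where "S \<subseteq> B" "B \<subseteq> F" "rig_indep d p B" "\<forall>f\<in>F. rig_row d p f \<in> fv.span (rig_row d p ` B)"
proof -
  have "fv.independent (rig_row d p ` S)"
    using indep_iff[OF finite_subset[OF assms(3,1)] inj_on_subset[OF assms(2,3)]] assms(4) by simp
  then obtain B' where B': "rig_row d p ` S \<subseteq> B'" "B' \<subseteq> rig_row d p ` F" "fv.independent B'"
    "rig_row d p ` F \<subseteq> fv.span B'"
    using fv.maximal_independent_subset_extend[of "rig_row d p ` S" "rig_row d p ` F"] assms(3) by blast
  define B where "B = {f\<in>F. rig_row d p f \<in> B'}"
  have img: "rig_row d p ` B = B'" using B'(2) by (auto simp: B_def)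
  have "S \<subseteq> B" using B' assms(3) by (auto simp: B_def)
  moreover have "B \<subseteq> F" by (auto simp: B_def)
  moreover have "rig_indep d p B"
  proof -
    have "finite B" using assms(1) \<open>B \<subseteq> F\<close> finite_subset by blast
    moreover have "inj_on (rig_row d p) B" using assms(2) \<open>B \<subseteq> F\<close> inj_on_subset by blast
    ultimately show ?thesis using indep_iff[of B d p] img B'(3) by simp
  qed
  moreover have "\<forall>f\<in>F. rig_row d p f \<in> fv.span (rig_row d p ` B)" using B'(4) img by auto
  ultimately show ?thesis by (rule that)
qed

lemma rank_le_card:
  assumes "finite F" "inj_on (rig_row d p) F"
  shows "rig_rank d p F \<le> card F"
proof -
  have "rig_indep d p {}" by (simp add: rig_indep_def)
  then obtain B where "B \<subseteq> F" "rig_indep d p B" "\<forall>f\<in>F. rig_row d p f \<in> fv.span (rig_row d p ` B)"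
    using extend_basis[OF assms, of "{}"] by (metis empty_subsetI)
  then have "rig_rank d p F = card B" by (intro rank_eq[OF assms])
  then show ?thesis using \<open>B \<subseteq> F\<close> assms(1) card_mono by simp
qed



lemma restrict_sum:
  assumes "finite D" "S \<subseteq> D"
  shows "(\<Sum>g\<in>D. (if g \<in> S then c g else 0) * (R g z::real)) = (\<Sum>g\<in>S. c g * R g z)"
proof -
  have "(\<Sum>g\<in>D. (if g \<in> S then c g else 0) * R g z) = (\<Sum>g\<in>D. if g \<in> S then c g * R g z else 0)"
    by (rule sum.cong) auto
  also have "\<dots> = (\<Sum>g\<in>D \<inter> S. c g * R g z)" by (rule sum.inter_restrict[OF assms(1), symmetric])
  also have "D \<inter> S = S" using assms(2) by blast
  finally show ?thesis .
qed

lemma circ_dep: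
  assumes "finite D" "C \<subseteq> D" "rig_circuit d p C" "f \<in> C"
  shows "\<exists>c. (\<forall>z. (\<Sum>g\<in>D. c g * rig_row d p g z) = 0) \<and> c f \<noteq> 0"
proof -
  from assms(3) obtain c e0 where c: "\<forall>x. (\<Sum>e\<in>C. c e * rig_row d p e x) = 0" "e0 \<in> C" "c e0 \<noteq> 0"
    unfolding rig_circuit_def rig_indep_def by blast
  have fC: "finite C" using assms(1,2) finite_subset by blast
  have cf: "c f \<noteq> 0"
  proof
    assume cf0: "c f = 0"
    have "C - {f} \<subset> C" using assms(4) by blast
    then have ind: "rig_indep d p (C - {f})" using assms(3) unfolding rig_circuit_def by blast
    have "\<forall>x. (\<Sum>e\<in>C - {f}. c e * rig_row d p e x) = 0"
    proof
      fix x
      have "(\<Sum>e\<in>C. c e * rig_row d p e x) = c f * rig_row d p f x + (\<Sum>e\<in>C - {f}. c e * rig_row d p e x)"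
        using sum.remove[OF fC assms(4)] by blast
      then show "(\<Sum>e\<in>C - {f}. c e * rig_row d p e x) = 0" using c(1) cf0 by simp
    qed
    then have "\<forall>e\<in>C - {f}. c e = 0" using ind unfolding rig_indep_def by blast
    then show False using c(2,3) cf0 by (cases "e0 = f") auto
  qed
  define c' where "c' = (\<lambda>g. if g \<in> C then c g else 0)"
  have "\<forall>z. (\<Sum>g\<in>D. c' g * rig_row d p g z) = 0"
    unfolding c'_def using restrict_sum[OF assms(1,2), of c "rig_row d p"] c(1) by simp
  moreover have "c' f \<noteq> 0" using cf assms(4) by (simp add: c'_def)
  ultimately show ?thesis by blast
qed

lemma dep_circ:
  assumes "finite D" "f \<in> D"
  shows "(\<forall>z. (\<Sum>g\<in>D. c g * rig_row d p g z) = 0) \<Longrightarrow> c f \<noteq> 0 \<Longrightarrow> \<exists>C\<subseteq>D. f \<in> C \<and> rig_circuit d p C"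
proof (induction "card {g\<in>D. c g \<noteq> 0}" arbitrary: c rule: less_induct)
  case less
  define S where "S = {g\<in>D. c g \<noteq> 0}"
  have SD: "S \<subseteq> D" and fS: "f \<in> S" using less.prems assms by (auto simp: S_def)
  have finS: "finite S" using assms(1) SD finite_subset by blast
  have combS: "\<forall>z. (\<Sum>g\<in>S. c g * rig_row d p g z) = 0"
  proof
    fix z
    have "(\<Sum>g\<in>S. c g * rig_row d p g z) = (\<Sum>g\<in>D. (if g \<in> S then c g else 0) * rig_row d p g z)"
      by (rule restrict_sum[OF assms(1) SD, symmetric])
    also have "\<dots> = (\<Sum>g\<in>D. c g * rig_row d p g z)"
      by (rule sum.cong) (auto simp: S_def)
    finally show "(\<Sum>g\<in>S. c g * rig_row d p g z) = 0" using less.prems(1) by simp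
  qed
  have depS: "\<not> rig_indep d p S"
    unfolding rig_indep_def using combS fS less.prems(2) by blast
  show ?case
  proof (cases "\<forall>C'. C' \<subset> S \<longrightarrow> rig_indep d p C'")
    case True
    then have "rig_circuit d p S" using depS by (simp add: rig_circuit_def)
    then show ?thesis using SD fS by blast
  next
    case False
    then obtain C' where C': "C' \<subset> S" "\<not> rig_indep d p C'" by blast
    then obtain b g where b: "\<forall>x. (\<Sum>e\<in>C'. b e * rig_row d p e x) = 0" "g \<in> C'" "b g \<noteq> 0"
      unfolding rig_indep_def by blast
    have C'D: "C' \<subseteq> D" using C'(1) SD by blast
    define b' where "b' = (\<lambda>h. if h \<in> C' then b h else 0)"
    have combb: "\<forall>z. (\<Sum>h\<in>D. b' h * rig_row d p h z) = 0"
      unfolding b'_def using restrict_sum[OF assms(1) C'D, of b "rig_row d p"] b(1) by simp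
    show ?thesis
    proof (cases "b' f \<noteq> 0")
      case True
      have sub: "{h\<in>D. b' h \<noteq> 0} \<subseteq> C'" by (auto simp: b'_def split: if_splits)
      have "card {h\<in>D. b' h \<noteq> 0} \<le> card C'"
        using card_mono[OF finite_subset[OF C'D assms(1)] sub] .
      also have "card C' < card S" using psubset_card_mono[OF finS C'(1)] .
      finally have "card {h\<in>D. b' h \<noteq> 0} < card {g\<in>D. c g \<noteq> 0}" by (simp add: S_def)
      then show ?thesis by (rule less.hyps[OF _ combb True])
    next
      case False
      define t where "t = c g / b' g"
      define c' where "c' = (\<lambda>h. c h - t * b' h)"
      have bg: "b' g = b g" using b(2) by (simp add: b'_def)
      have comb': "\<forall>z. (\<Sum>h\<in>D. c' h * rig_row d p h z) = 0"
      proof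
        fix z
        have "(\<Sum>h\<in>D. c' h * rig_row d p h z) =
              (\<Sum>h\<in>D. c h * rig_row d p h z) - t * (\<Sum>h\<in>D. b' h * rig_row d p h z)"
          by (simp add: c'_def algebra_simps sum_subtractf sum_distrib_left)
        then show "(\<Sum>h\<in>D. c' h * rig_row d p h z) = 0" using combb less.prems(1) by simp
      qed
      have c'f: "c' f \<noteq> 0" using False less.prems(2) by (simp add: c'_def)
      have gS: "g \<in> S" using C'(1) b(2) by blast
      have sub: "{h\<in>D. c' h \<noteq> 0} \<subseteq> S - {g}"
      proof
        fix h assume h: "h \<in> {h\<in>D. c' h \<noteq> 0}"
        have "h \<in> S"
        proof (rule ccontr)
          assume "h \<notin> S"
          then have "c h = 0" "h \<notin> C'" using h C'(1) by (auto simp: S_def)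
          then show False using h by (simp add: c'_def b'_def)
        qed
        moreover have "h \<noteq> g"
        proof
          assume "h = g"
          then have "c' h = 0" using bg b(3) by (simp add: c'_def t_def)
          then show False using h by simp
        qed
        ultimately show "h \<in> S - {g}" by blast
      qed
      have "card {h\<in>D. c' h \<noteq> 0} \<le> card (S - {g})"
        using card_mono[OF _ sub] finS by simp
      also have "\<dots> < card S" using card_Diff1_less[OF finS gS] .
      finally have "card {h\<in>D. c' h \<noteq> 0} < card {g\<in>D. c g \<noteq> 0}" by (simp add: S_def)
      then show ?thesis by (rule less.hyps[OF _ comb' c'f])
    qed
  qed
qed

definition dep :: "nat \<Rightarrow> ('a \<Rightarrow> nat \<Rightarrow> real) \<Rightarrow> 'a set set \<Rightarrow> 'a set \<Rightarrow> bool" where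
  "dep d p D f \<longleftrightarrow> (\<exists>c. (\<forall>z. (\<Sum>g\<in>D. c g * rig_row d p g z) = 0) \<and> c f \<noteq> 0)"

lemma cyc_iff:
  assumes "finite D"
  shows "rig_cyclic d p D \<longleftrightarrow> (\<forall>f\<in>D. dep d p D f)"
proof
  assume "rig_cyclic d p D"
  then obtain CC where CC: "\<forall>C\<in>CC. rig_circuit d p C" "\<Union>CC = D" unfolding rig_cyclic_def by blast
  show "\<forall>f\<in>D. dep d p D f"
  proof
    fix f assume "f \<in> D"
    then obtain C where "C \<in> CC" "f \<in> C" using CC(2) by blast
    moreover have "C \<subseteq> D" using \<open>C \<in> CC\<close> CC(2) by blast
    ultimately show "dep d p D f" unfolding dep_def
      using circ_dep[OF assms, of C d p f] CC(1) by blast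
  qed
next
  assume h: "\<forall>f\<in>D. dep d p D f"
  let ?CC = "{C. C \<subseteq> D \<and> rig_circuit d p C}"
  have "\<Union>?CC = D"
  proof
    show "\<Union>?CC \<subseteq> D" by blast
    show "D \<subseteq> \<Union>?CC"
    proof
      fix f assume f: "f \<in> D"
      obtain c where c: "\<forall>z. (\<Sum>g\<in>D. c g * rig_row d p g z) = 0" "c f \<noteq> 0"
        using h f unfolding dep_def by blast
      obtain C where "C \<subseteq> D" "f \<in> C" "rig_circuit d p C" using dep_circ[OF assms f c] by blast
      then show "f \<in> \<Union>?CC" by blast
    qed
  qed
  then show "rig_cyclic d p D" unfolding rig_cyclic_def by (intro exI[of _ ?CC] conjI) auto
qed

lemma noncoloop_dep:
  assumes "finite E" "e \<in> E" "\<not> rig_coloop d p E e"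
  shows "dep d p E e"
proof -
  obtain C where C: "C \<subseteq> E" "rig_circuit d p C" "e \<in> C" using assms unfolding rig_coloop_def by blast
  show ?thesis unfolding dep_def by (rule circ_dep[OF assms(1) C])
qed



lemma cyc_back:
  assumes fin1: "finite E1" and fin2: "finite E2" and int: "E1 \<inter> E2 = {e}"
    and f: "f \<in> E1" "f \<noteq> e" and d1: "dep d p E1 f" and d2: "dep d p E2 e"
  shows "dep d p ((E1 \<union> E2) - {e}) f"
proof -
  obtain c1 where c1: "\<forall>z. (\<Sum>g\<in>E1. c1 g * rig_row d p g z) = 0" "c1 f \<noteq> 0"
    using d1 unfolding dep_def by blast
  obtain c2 where c2: "\<forall>z. (\<Sum>g\<in>E2. c2 g * rig_row d p g z) = 0" "c2 e \<noteq> 0"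
    using d2 unfolding dep_def by blast
  define t where "t = c1 e / c2 e"
  define c where "c = (\<lambda>x. (if x \<in> E1 then c1 x else 0) - t * (if x \<in> E2 then c2 x else 0))"
  have finU: "finite (E1 \<union> E2)" using fin1 fin2 by simp
  have eU: "e \<in> E1 \<union> E2" using int by blast
  have ce: "c e = 0" using int c2(2) by (auto simp: c_def t_def)
  have cf: "c f = c1 f" using f int by (auto simp: c_def)
  have A: "\<forall>z. (\<Sum>g\<in>(E1 \<union> E2) - {e}. c g * rig_row d p g z) = 0"
  proof
    fix z
    have s1: "(\<Sum>g\<in>E1 \<union> E2. (if g \<in> E1 then c1 g else 0) * rig_row d p g z) = (\<Sum>g\<in>E1. c1 g * rig_row d p g z)"
      by (rule restrict_sum[OF finU]) blast
    have s2: "(\<Sum>g\<in>E1 \<union> E2. (if g \<in> E2 then c2 g else 0) * rig_row d p g z) = (\<Sum>g\<in>E2. c2 g * rig_row d p g z)"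
      by (rule restrict_sum[OF finU]) blast
    have "(\<Sum>g\<in>E1 \<union> E2. c g * rig_row d p g z) =
       (\<Sum>g\<in>E1 \<union> E2. (if g \<in> E1 then c1 g else 0) * rig_row d p g z)
       - t * (\<Sum>g\<in>E1 \<union> E2. (if g \<in> E2 then c2 g else 0) * rig_row d p g z)"
      unfolding c_def by (simp add: algebra_simps sum_subtractf sum_distrib_left)
    also have "\<dots> = 0" unfolding s1 s2 using spec[OF c1(1), of z] spec[OF c2(1), of z] by simp
    finally have "(\<Sum>g\<in>E1 \<union> E2. c g * rig_row d p g z) = 0" .
    moreover have "(\<Sum>g\<in>E1 \<union> E2. c g * rig_row d p g z) = c e * rig_row d p e z + (\<Sum>g\<in>(E1 \<union> E2) - {e}. c g * rig_row d p g z)"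
      by (rule sum.remove[OF finU eU])
    ultimately show "(\<Sum>g\<in>(E1 \<union> E2) - {e}. c g * rig_row d p g z) = 0" using ce by simp
  qed
  have B: "c f \<noteq> 0" using cf c1(2) by simp
  show ?thesis unfolding dep_def by (rule exI[of _ c], rule conjI[OF A B])
qed

lemma cyc_fwd:
  assumes fin1: "finite E1" and fin2: "finite E2" and int: "E1 \<inter> E2 = {e}"
    and f: "f \<in> E1" "f \<noteq> e" and dE: "dep d p ((E1 \<union> E2) - {e}) f"
    and keyA: "\<And>a b. (\<And>z. (\<Sum>g\<in>E1. a g * rig_row d p g z) = (\<Sum>g\<in>E2. b g * rig_row d p g z))
        \<Longrightarrow> \<exists>l. \<forall>z. (\<Sum>g\<in>E1. a g * rig_row d p g z) = l * rig_row d p e z"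
  shows "dep d p E1 f"
proof -
  obtain c where c: "\<forall>z. (\<Sum>g\<in>(E1 \<union> E2) - {e}. c g * rig_row d p g z) = 0" "c f \<noteq> 0"
    using dE unfolding dep_def by blast
  define a where "a = (\<lambda>g. if g \<in> E1 - {e} then c g else 0)"
  define b where "b = (\<lambda>g. if g \<in> E2 - {e} then - c g else 0)"
  have split: "(E1 \<union> E2) - {e} = (E1 - {e}) \<union> (E2 - {e})" by blast
  have disj: "(E1 - {e}) \<inter> (E2 - {e}) = {}" using int by blast
  have sa: "(\<Sum>g\<in>E1. a g * rig_row d p g z) = (\<Sum>g\<in>E1 - {e}. c g * rig_row d p g z)" for z
    unfolding a_def by (rule restrict_sum[OF fin1]) blast
  have sb: "(\<Sum>g\<in>E2. b g * rig_row d p g z) = - (\<Sum>g\<in>E2 - {e}. c g * rig_row d p g z)" for z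
  proof -
    have "(\<Sum>g\<in>E2. b g * rig_row d p g z) = (\<Sum>g\<in>E2 - {e}. - c g * rig_row d p g z)"
      unfolding b_def by (rule restrict_sum[OF fin2]) blast
    then show ?thesis by (simp add: sum_negf)
  qed
  have "(\<Sum>g\<in>E1. a g * rig_row d p g z) = (\<Sum>g\<in>E2. b g * rig_row d p g z)" for z
  proof -
    have "(\<Sum>g\<in>(E1 \<union> E2) - {e}. c g * rig_row d p g z) =
          (\<Sum>g\<in>E1 - {e}. c g * rig_row d p g z) + (\<Sum>g\<in>E2 - {e}. c g * rig_row d p g z)"
      unfolding split by (rule sum.union_disjoint) (use fin1 fin2 disj in auto)
    then show ?thesis unfolding sa sb using c(1) by simp
  qed
  then obtain l where l: "\<forall>z. (\<Sum>g\<in>E1. a g * rig_row d p g z) = l * rig_row d p e z"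
    using keyA by blast
  define c' where "c' = (\<lambda>g. a g - (if g = e then l else 0))"
  have eE1: "e \<in> E1" using int by blast
  have A: "\<forall>z. (\<Sum>g\<in>E1. c' g * rig_row d p g z) = 0"
  proof
    fix z
    have "(\<Sum>g\<in>E1. (if g = e then l else 0) * rig_row d p g z) = (\<Sum>g\<in>E1. if g = e then l * rig_row d p g z else 0)"
      by (rule sum.cong) auto
    also have "\<dots> = l * rig_row d p e z" using eE1 fin1 by (simp add: sum.delta)
    finally have "(\<Sum>g\<in>E1. (if g = e then l else 0) * rig_row d p g z) = l * rig_row d p e z" .
    moreover have "(\<Sum>g\<in>E1. c' g * rig_row d p g z) = (\<Sum>g\<in>E1. a g * rig_row d p g z) - (\<Sum>g\<in>E1. (if g = e then l else 0) * rig_row d p g z)"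
      unfolding c'_def by (simp add: algebra_simps sum_subtractf)
    ultimately show "(\<Sum>g\<in>E1. c' g * rig_row d p g z) = 0" using l by simp
  qed
  have B: "c' f \<noteq> 0" using f c(2) by (simp add: c'_def a_def)
  show ?thesis unfolding dep_def by (rule exI[of _ c'], rule conjI[OF A B])
qed

lemma rank_sum:
  assumes fin1: "finite E1" and fin2: "finite E2" and int: "E1 \<inter> E2 = {e}"
    and inj: "inj_on (rig_row d p) (E1 \<union> E2)" and ie: "rig_indep d p {e}"
    and keyA: "\<And>a b. (\<And>z. (\<Sum>g\<in>E1. a g * rig_row d p g z) = (\<Sum>g\<in>E2. b g * rig_row d p g z))
        \<Longrightarrow> \<exists>l. \<forall>z. (\<Sum>g\<in>E1. a g * rig_row d p g z) = l * rig_row d p e z"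
    and de: "dep d p E1 e"
  shows "rig_rank d p ((E1 \<union> E2) - {e}) + 1 = rig_rank d p E1 + rig_rank d p E2"
proof -
  let ?R = "rig_row d p"
  have finU: "finite (E1 \<union> E2)" using fin1 fin2 by simp
  have eE: "e \<in> E1" "e \<in> E2" using int by auto
  have inj1: "inj_on ?R E1" and inj2: "inj_on ?R E2" using inj_on_subset[OF inj, of E1] inj_on_subset[OF inj, of E2] by auto
  obtain B1 where B1: "{e} \<subseteq> B1" "B1 \<subseteq> E1" "rig_indep d p B1" "\<forall>f\<in>E1. ?R f \<in> fv.span (?R ` B1)"
    by (rule extend_basis[OF fin1 inj1 _ ie]) (use eE(1) in simp)
  obtain B2 where B2: "{e} \<subseteq> B2" "B2 \<subseteq> E2" "rig_indep d p B2" "\<forall>f\<in>E2. ?R f \<in> fv.span (?R ` B2)"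
    by (rule extend_basis[OF fin2 inj2 _ ie]) (use eE(2) in simp)
  have finB: "finite B1" "finite B2" using finite_subset[OF B1(2) fin1] finite_subset[OF B2(2) fin2] by auto
  have B12: "B1 \<inter> B2 = {e}"
  proof
    have "B1 \<inter> B2 \<subseteq> E1 \<inter> E2" using B1(2) B2(2) by blast
    then show "B1 \<inter> B2 \<subseteq> {e}" using int by simp
    show "{e} \<subseteq> B1 \<inter> B2" using B1(1) B2(1) by simp
  qed
  have r1: "rig_rank d p E1 = card B1" by (rule rank_eq[OF fin1 inj1 B1(2-4)])
  have r2: "rig_rank d p E2 = card B2" by (rule rank_eq[OF fin2 inj2 B2(2-4)])
  have indU: "rig_indep d p (B1 \<union> B2)"
    unfolding rig_indep_def
  proof (intro allI impI)
    fix c assume hc: "\<forall>x. (\<Sum>f\<in>B1 \<union> B2. c f * ?R f x) = 0"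
    have splitU: "B1 \<union> B2 = B1 \<union> (B2 - {e})" using B1 by blast
    have sumU: "(\<Sum>f\<in>B1. c f * ?R f z) + (\<Sum>f\<in>B2 - {e}. c f * ?R f z) = 0" for z
    proof -
      have "(\<Sum>f\<in>B1 \<union> B2. c f * ?R f z) = (\<Sum>f\<in>B1. c f * ?R f z) + (\<Sum>f\<in>B2 - {e}. c f * ?R f z)"
        unfolding splitU by (rule sum.union_disjoint) (use finB B12 in auto)
      then show ?thesis using hc by simp
    qed
    define a where "a = (\<lambda>g. if g \<in> B1 then c g else 0)"
    define b where "b = (\<lambda>g. if g \<in> B2 - {e} then - c g else 0)"
    have sa: "(\<Sum>g\<in>E1. a g * ?R g z) = (\<Sum>g\<in>B1. c g * ?R g z)" for z
      unfolding a_def by (rule restrict_sum[OF fin1 B1(2)])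
    have sb: "(\<Sum>g\<in>E2. b g * ?R g z) = - (\<Sum>g\<in>B2 - {e}. c g * ?R g z)" for z
    proof -
      have "(\<Sum>g\<in>E2. b g * ?R g z) = (\<Sum>g\<in>B2 - {e}. - c g * ?R g z)"
        unfolding b_def by (rule restrict_sum[OF fin2]) (use B2 in blast)
      then show ?thesis by (simp add: sum_negf)
    qed
    have "(\<Sum>g\<in>E1. a g * ?R g z) = (\<Sum>g\<in>E2. b g * ?R g z)" for z
      unfolding sa sb using sumU[of z] by linarith
    then obtain l where l: "\<forall>z. (\<Sum>g\<in>E1. a g * ?R g z) = l * ?R e z"
      using keyA by blast
    have l1: "(\<Sum>g\<in>B1. c g * ?R g z) = l * ?R e z" for z using spec[OF l, of z] sa[of z] by simp
    have delta: "(\<Sum>g\<in>B. (if g = e then l else 0) * ?R g z) = l * ?R e z" if "finite B" "e \<in> B" for B z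
    proof -
      have "(\<Sum>g\<in>B. (if g = e then l else 0) * ?R g z) = (\<Sum>g\<in>B. if g = e then l * ?R g z else 0)"
        by (rule sum.cong) auto
      also have "\<dots> = l * ?R e z" using that by (simp add: sum.delta)
      finally show ?thesis .
    qed
    define c1 where "c1 = (\<lambda>f. c f - (if f = e then l else 0))"
    have "\<forall>x. (\<Sum>f\<in>B1. c1 f * ?R f x) = 0"
    proof
      fix x
      have "(\<Sum>f\<in>B1. c1 f * ?R f x) = (\<Sum>f\<in>B1. c f * ?R f x) - (\<Sum>f\<in>B1. (if f = e then l else 0) * ?R f x)"
        unfolding c1_def by (simp add: algebra_simps sum_subtractf)
      then show "(\<Sum>f\<in>B1. c1 f * ?R f x) = 0" using l1[of x] delta[OF finB(1), of x] B1(1) by simp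
    qed
    then have z1: "\<forall>f\<in>B1. c1 f = 0" using B1(3) unfolding rig_indep_def by blast
    then have cB1: "\<forall>f\<in>B1 - {e}. c f = 0" and ce: "c e = l" using B1(1) by (auto simp: c1_def)
    define c2 where "c2 = (\<lambda>g. if g = e then l else c g)"
    have "\<forall>x. (\<Sum>g\<in>B2. c2 g * ?R g x) = 0"
    proof
      fix x
      have "(\<Sum>g\<in>B2. c2 g * ?R g x) = c2 e * ?R e x + (\<Sum>g\<in>B2 - {e}. c2 g * ?R g x)"
        using sum.remove[OF finB(2), of e] B2(1) by blast
      also have "(\<Sum>g\<in>B2 - {e}. c2 g * ?R g x) = (\<Sum>g\<in>B2 - {e}. c g * ?R g x)"
        by (rule sum.cong) (auto simp: c2_def)
      finally show "(\<Sum>g\<in>B2. c2 g * ?R g x) = 0" using sumU[of x] l1[of x] by (simp add: c2_def)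
    qed
    then have z2: "\<forall>g\<in>B2. c2 g = 0" using B2(3) unfolding rig_indep_def by blast
    have l0: "l = 0" using bspec[OF z2, of e] B2(1) by (simp add: c2_def)
    have cB2: "\<forall>g\<in>B2 - {e}. c g = 0"
    proof
      fix g assume g: "g \<in> B2 - {e}"
      then show "c g = 0" using bspec[OF z2, of g] by (simp add: c2_def)
    qed
    show "\<forall>f\<in>B1 \<union> B2. c f = 0" using cB1 cB2 ce l0 by blast
  qed
  have spU: "\<forall>f\<in>E1 \<union> E2. ?R f \<in> fv.span (?R ` (B1 \<union> B2))"
    using B1(4) B2(4) fv.span_mono[of "?R ` B1" "?R ` (B1 \<union> B2)"] fv.span_mono[of "?R ` B2" "?R ` (B1 \<union> B2)"]
    by blast
  have rU: "rig_rank d p (E1 \<union> E2) = card (B1 \<union> B2)"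
    by (rule rank_eq[OF finU inj _ indU spU]) (use B1 B2 in blast)
  have cU: "card (B1 \<union> B2) + 1 = card B1 + card B2"
    using card_Un_Int[OF finB] B12 by simp
  let ?E = "(E1 \<union> E2) - {e}"
  have finE: "finite ?E" using finU by simp
  have injE: "inj_on ?R ?E" using inj_on_subset[OF inj, of ?E] by auto
  have ie0: "rig_indep d p {}" by (simp add: rig_indep_def)
  obtain B where B: "B \<subseteq> ?E" "rig_indep d p B" "\<forall>f\<in>?E. ?R f \<in> fv.span (?R ` B)"
    using extend_basis[OF finE injE, of "{}"] ie0 by (metis empty_subsetI)
  have Re: "?R e \<in> fv.span (?R ` B)"
  proof -
    obtain c where c: "\<forall>z. (\<Sum>g\<in>E1. c g * ?R g z) = 0" "c e \<noteq> 0"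
      using de unfolding dep_def by blast
    have "?R e = (\<lambda>z. \<Sum>g\<in>E1 - {e}. (- c g / c e) * ?R g z)"
    proof
      fix z
      have "(\<Sum>g\<in>E1. c g * ?R g z) = c e * ?R e z + (\<Sum>g\<in>E1 - {e}. c g * ?R g z)"
        using sum.remove[OF fin1 eE(1)] by blast
      then have "c e * ?R e z = - (\<Sum>g\<in>E1 - {e}. c g * ?R g z)" using c(1) by simp
      then have "?R e z = - (\<Sum>g\<in>E1 - {e}. c g * ?R g z) / c e" using c(2) by (simp add: field_simps)
      also have "\<dots> = (\<Sum>g\<in>E1 - {e}. (- c g / c e) * ?R g z)"
        by (simp add: sum_divide_distrib[symmetric] sum_negf)
      finally show "?R e z = (\<Sum>g\<in>E1 - {e}. (- c g / c e) * ?R g z)" .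
    qed
    also have "\<dots> = (\<Sum>g\<in>E1 - {e}. sc (- c g / c e) (?R g))"
      by (rule comb_eq[symmetric])
    also have "\<dots> \<in> fv.span (?R ` B)"
    proof (rule fv.span_sum)
      fix g assume "g \<in> E1 - {e}"
      then have "?R g \<in> fv.span (?R ` B)" using B(3) by blast
      then show "sc (- c g / c e) (?R g) \<in> fv.span (?R ` B)" by (rule fv.span_scale)
    qed
    finally show ?thesis .
  qed
  have spB: "\<forall>f\<in>E1 \<union> E2. ?R f \<in> fv.span (?R ` B)"
  proof
    fix f assume "f \<in> E1 \<union> E2"
    then show "?R f \<in> fv.span (?R ` B)" using B(3) Re by (cases "f = e") auto
  qed
  have "rig_rank d p (E1 \<union> E2) = card B"
    by (rule rank_eq[OF finU inj _ B(2) spB]) (use B(1) in blast)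
  moreover have "rig_rank d p ?E = card B" by (rule rank_eq[OF finE injE B(1) B(2,3)]) 
  ultimately show ?thesis using rU cU r1 r2 by simp
qed



theorem lemma3p4:
  fixes d k :: nat and p :: "'a \<Rightarrow> nat \<Rightarrow> real"
    and V1 V2 V :: "'a set" and E1 E2 E :: "'a set set" and e :: "'a set"
  assumes "d \<ge> 1"
    and "two_sum V1 E1 V2 E2 e V E"
    and "generic d V p"
    and "\<not> rig_coloop d p E1 e"
    and "\<not> rig_coloop d p E2 e"
  shows "k_fold_circuit d p k E \<longleftrightarrow>
         (\<exists>k1 k2. k_fold_circuit d p k1 E1 \<and> k_fold_circuit d p k2 E2 \<and> k1 + k2 = k + 1)"
proof -
  note d1 = assms(1)
  have sg1: "simple_graph V1 E1" and sg2: "simple_graph V2 E2" and Vint: "V1 \<inter> V2 = e"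
    and Eint: "E1 \<inter> E2 = {e}" and VV: "V = V1 \<union> V2" and EE: "E = (E1 \<union> E2) - {e}"
    using assms(2) unfolding two_sum_def by auto
  have eE: "e \<in> E1" "e \<in> E2" using Eint by auto
  obtain u v where uv: "u \<noteq> v" "e = {u,v}" "u \<in> V1" "v \<in> V1" using sg_edge[OF sg1 eE(1)] by blast
  have finV: "finite V" using sg1 sg2 VV by (simp add: simple_graph_def)
  have fin1: "finite E1" and fin2: "finite E2" using sg_fin sg1 sg2 by auto
  have finE: "finite E" using EE fin1 fin2 by simp
  have dist: "p x 0 \<noteq> p y 0" if "x \<in> V" "y \<in> V" "x \<noteq> y" for x y
    using generic_distinct[OF assms(3) d1 finV that] .
  have edges: "\<exists>x y. x \<noteq> y \<and> f = {x,y} \<and> x \<in> V \<and> y \<in> V" if "f \<in> E1 \<union> E2" for f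
  proof (cases "f \<in> E1")
    case True then show ?thesis using sg_edge[OF sg1 True] VV by blast
  next
    case False then have "f \<in> E2" using that by blast
    then show ?thesis using sg_edge[OF sg2] VV by blast
  qed
  have d0: "0 < d" using d1 by simp
  have rowx: "rig_row d p {x,y} (x,0) = p x 0 - p y 0" if "x \<noteq> y" for x y
    using row_edge[OF that, of d p x 0] d0 by simp
  have inj: "inj_on (rig_row d p) (E1 \<union> E2)"
  proof (rule inj_onI)
    fix f g assume f: "f \<in> E1 \<union> E2" and g: "g \<in> E1 \<union> E2" and eq: "rig_row d p f = rig_row d p g"
    obtain x y where xy: "x \<noteq> y" "f = {x,y}" "x \<in> V" "y \<in> V" using edges[OF f] by blast
    obtain x' y' where xy': "x' \<noteq> y'" "g = {x',y'}" using edges[OF g] by blast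
    have "rig_row d p g (x,0) \<noteq> 0" using eq rowx[OF xy(1)] dist[OF xy(3,4,1)] xy(2) by simp
    then have xg: "x \<in> g" using row_out1 by metis
    have "rig_row d p {y,x} (y,0) \<noteq> 0" using rowx[of y x] xy dist[OF xy(4,3)] by simp
    then have "rig_row d p g (y,0) \<noteq> 0" using eq xy(2) by (simp add: insert_commute)
    then have yg: "y \<in> g" using row_out1 by metis
    show "f = g" using xg yg xy(1,2) xy'(1,2) by auto
  qed
  have uvV: "u \<in> V" "v \<in> V" using uv VV by auto
  have pd: "p u 0 \<noteq> p v 0" using dist[OF uvV uv(1)] .
  have ie: "rig_indep d p {e}"
    unfolding rig_indep_def
  proof (intro allI impI)
    fix c assume hc: "\<forall>x. (\<Sum>f\<in>{e}. c f * rig_row d p f x) = 0"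
    have "c e * rig_row d p e (u,0) = 0" using spec[OF hc, of "(u,0)"] by simp
    then show "\<forall>f\<in>{e}. c f = 0" using rowx[OF uv(1)] uv(2) pd by simp
  qed
  have int12: "V1 \<inter> V2 = {u,v}" using Vint uv by simp
  have int21: "V2 \<inter> V1 = {u,v}" using Vint uv by blast
  have keyA: "\<exists>l. \<forall>z. (\<Sum>g\<in>E1. a g * rig_row d p g z) = l * rig_row d p e z"
    if "\<And>z. (\<Sum>g\<in>E1. a g * rig_row d p g z) = (\<Sum>g\<in>E2. b g * rig_row d p g z)" for a b
    using key[where u=u and v=v and p=p and d=d, OF sg1 sg2 int12 uv(1) d1 pd, of a b] that uv(2) by simp
  have keyB: "\<exists>l. \<forall>z. (\<Sum>g\<in>E2. a g * rig_row d p g z) = l * rig_row d p e z"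
    if "\<And>z. (\<Sum>g\<in>E2. a g * rig_row d p g z) = (\<Sum>g\<in>E1. b g * rig_row d p g z)" for a b
    using key[where u=u and v=v and p=p and d=d, OF sg2 sg1 int21 uv(1) d1 pd, of a b] that uv(2) by simp
  have dep1: "dep d p E1 e" by (rule noncoloop_dep[OF fin1 eE(1) assms(4)])
  have dep2: "dep d p E2 e" by (rule noncoloop_dep[OF fin2 eE(2) assms(5)])
  have Eint': "E2 \<inter> E1 = {e}" using Eint by blast
  have EE': "E = (E2 \<union> E1) - {e}" using EE by blast
  have cyc: "rig_cyclic d p E \<longleftrightarrow> rig_cyclic d p E1 \<and> rig_cyclic d p E2"
  proof
    assume cE: "rig_cyclic d p E"
    then have hE: "\<forall>f\<in>E. dep d p E f" using cyc_iff[OF finE] by simp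
    have "\<forall>f\<in>E1. dep d p E1 f"
    proof
      fix f assume f: "f \<in> E1"
      show "dep d p E1 f"
      proof (cases "f = e")
        case True then show ?thesis using dep1 by simp
      next
        case False
        then have "dep d p ((E1 \<union> E2) - {e}) f" using hE f EE by auto
        then show ?thesis
        proof (rule cyc_fwd[OF fin1 fin2 Eint f False])
          fix a b assume "\<And>z. (\<Sum>g\<in>E1. a g * rig_row d p g z) = (\<Sum>g\<in>E2. b g * rig_row d p g z)"
          then show "\<exists>l. \<forall>z. (\<Sum>g\<in>E1. a g * rig_row d p g z) = l * rig_row d p e z" by (rule keyA)
        qed
      qed
    qed
    moreover have "\<forall>f\<in>E2. dep d p E2 f"
    proof
      fix f assume f: "f \<in> E2"
      show "dep d p E2 f"
      proof (cases "f = e")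
        case True then show ?thesis using dep2 by simp
      next
        case False
        then have "dep d p ((E2 \<union> E1) - {e}) f" using hE f EE' by auto
        then show ?thesis
        proof (rule cyc_fwd[OF fin2 fin1 Eint' f False])
          fix a b assume "\<And>z. (\<Sum>g\<in>E2. a g * rig_row d p g z) = (\<Sum>g\<in>E1. b g * rig_row d p g z)"
          then show "\<exists>l. \<forall>z. (\<Sum>g\<in>E2. a g * rig_row d p g z) = l * rig_row d p e z" by (rule keyB)
        qed
      qed
    qed
    ultimately show "rig_cyclic d p E1 \<and> rig_cyclic d p E2"
      using cyc_iff[OF fin1] cyc_iff[OF fin2] by simp
  next
    assume "rig_cyclic d p E1 \<and> rig_cyclic d p E2"
    then have h1: "\<forall>f\<in>E1. dep d p E1 f" and h2: "\<forall>f\<in>E2. dep d p E2 f"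
      using cyc_iff[OF fin1] cyc_iff[OF fin2] by auto
    have "\<forall>f\<in>E. dep d p E f"
    proof
      fix f assume f: "f \<in> E"
      then have fne: "f \<noteq> e" using EE by blast
      show "dep d p E f"
      proof (cases "f \<in> E1")
        case True
        then show ?thesis using cyc_back[OF fin1 fin2 Eint True fne] h1 dep2 True EE by simp
      next
        case False
        then have f2: "f \<in> E2" using f EE by blast
        then show ?thesis using cyc_back[OF fin2 fin1 Eint' f2 fne] h2 dep1 EE' by simp
      qed
    qed
    then show "rig_cyclic d p E" using cyc_iff[OF finE] by simp
  qed
  have rk: "rig_rank d p E + 1 = rig_rank d p E1 + rig_rank d p E2"
  proof -
    have "rig_rank d p ((E1 \<union> E2) - {e}) + 1 = rig_rank d p E1 + rig_rank d p E2"
    proof (rule rank_sum[OF fin1 fin2 Eint inj ie _ dep1])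
      fix a b assume "\<And>z. (\<Sum>g\<in>E1. a g * rig_row d p g z) = (\<Sum>g\<in>E2. b g * rig_row d p g z)"
      then show "\<exists>l. \<forall>z. (\<Sum>g\<in>E1. a g * rig_row d p g z) = l * rig_row d p e z" by (rule keyA)
    qed
    then show ?thesis using EE by simp
  qed
  have inj1: "inj_on (rig_row d p) E1" using inj_on_subset[OF inj, of E1] by auto
  have inj2: "inj_on (rig_row d p) E2" using inj_on_subset[OF inj, of E2] by auto
  have le1: "rig_rank d p E1 \<le> card E1" by (rule rank_le_card[OF fin1 inj1])
  have le2: "rig_rank d p E2 \<le> card E2" by (rule rank_le_card[OF fin2 inj2])
  have cardE: "card E + 2 = card E1 + card E2"
  proof -
    have "card (E1 \<union> E2) + card (E1 \<inter> E2) = card E1 + card E2" using card_Un_Int[OF fin1 fin2] by simp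
    moreover have "card E = card (E1 \<union> E2) - 1" using EE eE by (simp add: card_Diff_singleton)
    moreover have "card (E1 \<union> E2) \<ge> 1" using eE fin1 fin2 by (metis One_nat_def Suc_leI card_gt_0_iff empty_iff finite_UnI UnI1)
    ultimately show ?thesis using Eint by simp
  qed
  show ?thesis
  proof
    assume "k_fold_circuit d p k E"
    then have cE: "rig_cyclic d p E" and rE: "int (rig_rank d p E) = int (card E) - int k"
      unfolding k_fold_circuit_def by auto
    define k1 where "k1 = card E1 - rig_rank d p E1"
    define k2 where "k2 = card E2 - rig_rank d p E2"
    have "k_fold_circuit d p k1 E1" unfolding k_fold_circuit_def k1_def using cyc cE le1 by auto
    moreover have "k_fold_circuit d p k2 E2" unfolding k_fold_circuit_def k2_def using cyc cE le2 by auto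
    moreover have "k1 + k2 = k + 1"
    proof -
      have "int k1 = int (card E1) - int (rig_rank d p E1)" using le1 by (simp add: k1_def)
      moreover have "int k2 = int (card E2) - int (rig_rank d p E2)" using le2 by (simp add: k2_def)
      moreover have "int (rig_rank d p E) + 1 = int (rig_rank d p E1) + int (rig_rank d p E2)"
        using rk by linarith
      moreover have "int (card E) + 2 = int (card E1) + int (card E2)" using cardE by linarith
      ultimately have "int (k1 + k2) = int (k + 1)" using rE by simp
      then show ?thesis by linarith
    qed
    ultimately show "\<exists>k1 k2. k_fold_circuit d p k1 E1 \<and> k_fold_circuit d p k2 E2 \<and> k1 + k2 = k + 1" by blast
  next
    assume "\<exists>k1 k2. k_fold_circuit d p k1 E1 \<and> k_fold_circuit d p k2 E2 \<and> k1 + k2 = k + 1"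
    then obtain k1 k2 where h: "k_fold_circuit d p k1 E1" "k_fold_circuit d p k2 E2" "k1 + k2 = k + 1" by blast
    have c12: "rig_cyclic d p E1" "rig_cyclic d p E2" using h unfolding k_fold_circuit_def by auto
    have r1: "int (rig_rank d p E1) = int (card E1) - int k1"
      and r2: "int (rig_rank d p E2) = int (card E2) - int k2" using h unfolding k_fold_circuit_def by auto
    have "int (rig_rank d p E) + 1 = int (rig_rank d p E1) + int (rig_rank d p E2)"
      using rk by linarith
    moreover have "int (card E) + 2 = int (card E1) + int (card E2)" using cardE by linarith
    moreover have "int k1 + int k2 = int k + 1" using h(3) by linarith
    ultimately have "int (rig_rank d p E) = int (card E) - int k" using r1 r2 by linarith
    then show "k_fold_circuit d p k E" unfolding k_fold_circuit_def using cyc c12 by simp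
  qed
qed

end
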